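(* Let $\kappa \ge 1$ and let $\epsilon_T$ satisfy $0<\epsilon_T<3\kappa$. Set $$y_{\max} = \kappa\sqrt{2\ln\!\left(\tfrac{3\kappa}{\epsilon_T}\right)},\qquad z_{\max} = \sqrt{2\ln\!\left(\tfrac{3\kappa}{\epsilon_T}\right)}.$$ Then $$\sup_{x\in\mathcal{D}_\kappa}\left|\frac{i}{\sqrt{2\pi}}\int_0^{y_{\max}}dy\int_{-z_{\max}}^{z_{\max}}dz\; z e^{-z^2/2}e^{-ixyz} \;-\; \frac{1}{x}\right| \le \epsilon_T ,$$ where $\mathcal{D}_\kappa=[-1,-1/\kappa]\cup[1/\kappa,1]$.
   Context: For $x\neq 0$ one has the integral representation $x^{-1} = \frac{i}{\sqrt{2\pi}}\int_0^\infty dy\int_{-\infty}^{\infty}dz\, z e^{-z^2/2}e^{-ixyz}$; the displayed double integral with finite limits $y_{\max},z_{\max}>0$ is its truncation. *)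

theory Defs
  imports "HOL-Analysis.Analysis"
begin

definition D_kappa :: "real \<Rightarrow> real set" where
  "D_kappa \<kappa> = {-1..-1/\<kappa>} \<union> {1/\<kappa>..1}"

definition trunc_inv :: "real \<Rightarrow> real \<Rightarrow> real \<Rightarrow> complex" where
  "trunc_inv ymax zmax x =
     (\<i> / complex_of_real (sqrt (2 * pi))) *
     integral {0..ymax} (\<lambda>y. integral {-zmax..zmax}
        (\<lambda>z. complex_of_real (z * exp (- (z^2) / 2)) * exp (- \<i> * complex_of_real (x * y * z))))"

end

theory Submission
  imports Defs "HOL-Probability.Probability"
begin


lemma phi_even: "std_normal_density (- x) = std_normal_density x"
  by (simp add: normal_density_def)

lemma integrable_phi_ind:
  "A \<in> sets borel \<Longrightarrow> integrable lborel (\<lambda>x. indicator A x * std_normal_density x)"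
  using integrable_real_mult_indicator[of A lborel std_normal_density] by (simp add: mult.commute)

lemma half_bound: "(\<integral>x. indicator {0<..} x * std_normal_density x \<partial>lborel) \<le> 1/2"
proof -
  let ?P = "\<integral>x. indicator {0<..} x * std_normal_density x \<partial>lborel"
  let ?N = "\<integral>x. indicator {..<0} x * std_normal_density x \<partial>lborel"
  have "?N = \<bar>-1\<bar> *\<^sub>R (\<integral>x. indicator {..<0} (0 + -1 * x) * std_normal_density (0 + -1*x) \<partial>lborel)"
    by (rule lborel_integral_real_affine) simp
  also have "\<dots> = ?P"
    by (auto intro!: Bochner_Integration.integral_cong simp: phi_even split: split_indicator)
  finally have NP: "?N = ?P" .
  have "?P + ?N = (\<integral>x. indicator {0<..} x * std_normal_density x + indicator {..<0} x * std_normal_density x \<partial>lborel)"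
    by (rule Bochner_Integration.integral_add[symmetric]) (auto intro!: integrable_phi_ind)
  also have "\<dots> \<le> (\<integral>x. std_normal_density x \<partial>lborel)"
    by (rule integral_mono) (auto intro!: integrable_phi_ind Bochner_Integration.integrable_add split: split_indicator)
  also have "\<dots> = 1" by simp
  finally show ?thesis using NP by simp
qed

lemma right_tail:
  assumes Z: "0 \<le> Z"
  shows "(\<integral>x. indicator {Z<..} x * std_normal_density x \<partial>lborel) \<le> exp (-(Z^2)/2) / 2"
proof -
  have int1: "integrable lborel (\<lambda>x. std_normal_density (-Z + 1 * x))"
    by (rule lborel_integrable_real_affine) auto
  have "(\<integral>x. indicator {Z<..} x * std_normal_density x \<partial>lborel)
     \<le> (\<integral>x. exp (-(Z^2)/2) * (indicator {Z<..} x * std_normal_density (-Z + 1 * x)) \<partial>lborel)"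
  proof (rule integral_mono)
    show "integrable lborel (\<lambda>x. indicator {Z<..} x * std_normal_density x)"
      by (auto intro!: integrable_phi_ind)
    show "integrable lborel (\<lambda>x. exp (-(Z^2)/2) * (indicator {Z<..} x * std_normal_density (-Z + 1 * x)))"
      using integrable_real_mult_indicator[OF _ int1, of "{Z<..}"]
      by (intro integrable_mult_right) (simp add: mult.commute)
    fix x :: real
    show "indicator {Z<..} x * std_normal_density x \<le> exp (-(Z^2)/2) * (indicator {Z<..} x * std_normal_density (-Z + 1 * x))"
    proof (cases "Z < x")
      case True
      have "-(x^2)/2 \<le> -(Z^2)/2 + -((x - Z)^2)/2"
      proof -
        have "0 \<le> Z * (x - Z)" using True Z by simp
        then show ?thesis by (simp add: power2_eq_square algebra_simps)
      qed
      then have "exp (-(x^2)/2) \<le> exp (-(Z^2)/2) * exp (-((x - Z)^2)/2)"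
        by (simp flip: exp_add)
      then show ?thesis using True
        by (simp add: normal_density_def mult_left_mono divide_right_mono)
    qed simp
  qed
  also have "\<dots> = exp (-(Z^2)/2) * (\<integral>x. indicator {Z<..} x * std_normal_density (-Z + 1 * x) \<partial>lborel)"
    by simp
  also have "(\<integral>x. indicator {Z<..} x * std_normal_density (-Z + 1 * x) \<partial>lborel)
      = \<bar>1\<bar> *\<^sub>R (\<integral>x. indicator {Z<..} (Z + 1 * x) * std_normal_density (-Z + 1 * (Z + 1 * x)) \<partial>lborel)"
    by (rule lborel_integral_real_affine) simp
  also have "\<dots> = (\<integral>x. indicator {0<..} x * std_normal_density x \<partial>lborel)"
    by (auto intro!: Bochner_Integration.integral_cong split: split_indicator)
  finally have R: "(\<integral>x. indicator {Z<..} x * std_normal_density x \<partial>lborel)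
     \<le> exp (-(Z^2)/2) * (\<integral>x. indicator {0<..} x * std_normal_density x \<partial>lborel)" by simp
  have "exp (-(Z^2)/2) * (\<integral>x. indicator {0<..} x * std_normal_density x \<partial>lborel) \<le> exp (-(Z^2)/2) * (1/2)"
    by (rule mult_left_mono[OF half_bound]) simp
  from order_trans[OF R this] show ?thesis by simp
qed

lemma two_tail:
  assumes Z: "0 \<le> Z"
  shows "(\<integral>x. indicator (- {-Z..Z}) x * std_normal_density x \<partial>lborel) \<le> exp (-(Z^2)/2)"
proof -
  let ?R = "\<integral>x. indicator {Z<..} x * std_normal_density x \<partial>lborel"
  let ?L = "\<integral>x. indicator {..<-Z} x * std_normal_density x \<partial>lborel"
  have "?L = \<bar>-1\<bar> *\<^sub>R (\<integral>x. indicator {..<-Z} (0 + -1 * x) * std_normal_density (0 + -1*x) \<partial>lborel)"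
    by (rule lborel_integral_real_affine) simp
  also have "\<dots> = ?R"
    by (auto intro!: Bochner_Integration.integral_cong simp: phi_even split: split_indicator)
  finally have LR: "?L = ?R" .
  have "(\<integral>x. indicator (- {-Z..Z}) x * std_normal_density x \<partial>lborel)
      = (\<integral>x. indicator {Z<..} x * std_normal_density x + indicator {..<-Z} x * std_normal_density x \<partial>lborel)"
    using Z by (auto intro!: Bochner_Integration.integral_cong split: split_indicator)
  also have "\<dots> = ?R + ?L"
    by (rule Bochner_Integration.integral_add) (auto intro!: integrable_phi_ind)
  finally show ?thesis using LR right_tail[OF Z] by simp
qed



lemma fourier:
  "(\<integral>z. std_normal_density z *\<^sub>R exp (\<i> * complex_of_real (t * z)) \<partial>lborel) = complex_of_real (exp (-(t^2)/2))"
proof -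
  have "char std_normal_distribution t = complex_of_real (exp (-(t^2)/2))"
    by (simp add: char_std_normal_distribution)
  moreover have "char std_normal_distribution t = (\<integral>z. std_normal_density z *\<^sub>R exp (\<i> * complex_of_real (t * z)) \<partial>lborel)"
    unfolding char_def by (subst integral_density) auto
  ultimately show ?thesis by simp
qed

lemma inner_y:
  fixes x Y z :: real
  assumes "0 \<le> Y" "x \<noteq> 0"
  shows "integral {0..Y} (\<lambda>y. complex_of_real (z * exp (- (z^2) / 2)) * exp (- \<i> * complex_of_real (x * y * z)))
     = complex_of_real (exp (-(z^2)/2)) * (1 - exp (- \<i> * complex_of_real (x * Y * z))) / (\<i> * complex_of_real x)"
proof -
  define c where "c = complex_of_real (exp (-(z^2)/2))"
  define G where "G = (\<lambda>w. - c * exp (- \<i> * complex_of_real x * w * complex_of_real z) / (\<i> * complex_of_real x))"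
  have "((\<lambda>y. complex_of_real (z * exp (- (z^2) / 2)) * exp (- \<i> * complex_of_real (x * y * z))) has_integral
        G (complex_of_real Y) - G (complex_of_real 0)) {0..Y}"
  proof (rule fundamental_theorem_of_calculus)
    show "0 \<le> Y" by fact
    fix y assume "y \<in> {0..Y}"
    have "(G has_field_derivative complex_of_real (z * exp (- (z^2) / 2)) * exp (- \<i> * complex_of_real (x * y * z))) (at (complex_of_real y))"
      unfolding G_def c_def using assms
      by (auto intro!: derivative_eq_intros simp: field_simps)
    from has_vector_derivative_real_field[OF this]
    show "((\<lambda>y. G (complex_of_real y)) has_vector_derivative complex_of_real (z * exp (- (z^2) / 2)) * exp (- \<i> * complex_of_real (x * y * z))) (at y within {0..Y})" .
  qed
  then have "integral {0..Y} (\<lambda>y. complex_of_real (z * exp (- (z^2) / 2)) * exp (- \<i> * complex_of_real (x * y * z))) = G (complex_of_real Y) - G (complex_of_real 0)"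
    by (rule integral_unique)
  also have "\<dots> = c * (1 - exp (- \<i> * complex_of_real (x * Y * z))) / (\<i> * complex_of_real x)"
    unfolding G_def using assms by (simp add: field_simps)
  finally show ?thesis unfolding c_def .
qed



lemma stepA:
  fixes x Y Z :: real
  assumes "0 \<le> Y" "x \<noteq> 0"
  shows "trunc_inv Y Z x = (1 / complex_of_real x) * integral {-Z..Z}
     (\<lambda>z. complex_of_real (std_normal_density z) * (1 - exp (- \<i> * complex_of_real (x * Y * z))))"
proof -
  define f where "f = (\<lambda>y z. complex_of_real (z * exp (- (z^2) / 2)) * exp (- \<i> * complex_of_real (x * y * z)))"
  have sw: "integral (cbox 0 Y) (\<lambda>y. integral (cbox (-Z) Z) (f y)) = integral (cbox (-Z) Z) (\<lambda>z. integral (cbox 0 Y) (\<lambda>y. f y z))"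
    by (rule integral_swap_continuous) (auto simp: f_def case_prod_beta intro!: continuous_intros)
  have s2: "sqrt (2 * pi) > 0" by simp
  have "integral {-Z..Z} (\<lambda>z. integral {0..Y} (\<lambda>y. f y z))
     = integral {-Z..Z} (\<lambda>z. (complex_of_real (sqrt (2*pi)) / (\<i> * complex_of_real x)) *
          (complex_of_real (std_normal_density z) * (1 - exp (- \<i> * complex_of_real (x * Y * z)))))"
  proof (rule integral_cong)
    fix z assume "z \<in> {-Z..Z}"
    have er: "exp (-(z^2)/2) = sqrt (2*pi) * std_normal_density z"
      using s2 by (simp add: std_normal_density_def)
    have e: "complex_of_real (exp (-(z^2)/2)) = complex_of_real (sqrt (2*pi)) * complex_of_real (std_normal_density z)"
      by (metis er of_real_mult)
    show "integral {0..Y} (\<lambda>y. f y z) = (complex_of_real (sqrt (2*pi)) / (\<i> * complex_of_real x)) *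
          (complex_of_real (std_normal_density z) * (1 - exp (- \<i> * complex_of_real (x * Y * z))))"
      unfolding f_def inner_y[OF assms] e by simp
  qed
  also have "\<dots> = (complex_of_real (sqrt (2*pi)) / (\<i> * complex_of_real x)) * integral {-Z..Z}
     (\<lambda>z. complex_of_real (std_normal_density z) * (1 - exp (- \<i> * complex_of_real (x * Y * z))))"
    by (rule integral_mult_right)
  finally have I: "integral {-Z..Z} (\<lambda>z. integral {0..Y} (\<lambda>y. f y z)) = \<dots>" .
  have tr: "trunc_inv Y Z x = (\<i> / complex_of_real (sqrt (2 * pi))) * integral {0..Y} (\<lambda>y. integral {-Z..Z} (f y))"
    unfolding trunc_inv_def f_def by simp
  have c: "(\<i> / complex_of_real (sqrt (2 * pi))) * (complex_of_real (sqrt (2*pi)) / (\<i> * complex_of_real x)) = 1 / complex_of_real x"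
    using s2 assms by (simp add: field_simps)
  show ?thesis
    unfolding tr using sw I c by (simp add: cbox_interval mult.assoc[symmetric])
qed



lemma pointwise:
  fixes x Y Z :: real
  assumes "0 \<le> Y" "x \<noteq> 0" "0 \<le> Z"
  shows "cmod (trunc_inv Y Z x - 1 / complex_of_real x) \<le> (2 * exp (-(Z^2)/2) + exp (-((x*Y)^2)/2)) / \<bar>x\<bar>"
proof -
  define e where "e = (\<lambda>z. exp (\<i> * complex_of_real ((-(x*Y)) * z)))"
  define K where "K = (\<lambda>z. std_normal_density z *\<^sub>R (1 - e z))"
  define S where "S = {-Z..Z}"
  have e_alt: "\<And>z. exp (- \<i> * complex_of_real (x * Y * z)) = e z"
    unfolding e_def by (simp add: algebra_simps)
  have cmod_e: "\<And>z. cmod (e z) = 1" unfolding e_def by (simp add: norm_exp_i_times)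
  have contK: "continuous_on A K" for A unfolding K_def e_def
    by (auto simp: normal_density_def intro!: continuous_intros)
  have measK: "K \<in> borel_measurable lborel"
    using contK[of UNIV] by (simp add: borel_measurable_continuous_onI)
  have normK: "norm (K z) \<le> 2 * std_normal_density z" for z
  proof -
    have "norm (1 - e z) \<le> norm (1::complex) + norm (e z)" by (rule norm_triangle_ineq4)
    then have "norm (1 - e z) \<le> 2" using cmod_e by simp
    then have "std_normal_density z * norm (1 - e z) \<le> std_normal_density z * 2"
      by (rule mult_left_mono) simp
    then show ?thesis unfolding K_def
      by (simp add: mult.commute)
  qed
  have int_phi: "integrable lborel std_normal_density" by simp
  have int_phi2: "integrable lborel (\<lambda>z. 2 * std_normal_density z)" by simp
  have intK: "integrable lborel K"
    by (rule Bochner_Integration.integrable_bound[OF int_phi2 measK]) (auto intro: order_trans[OF normK])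
  have inte: "integrable lborel (\<lambda>z. std_normal_density z *\<^sub>R e z)"
  proof (rule Bochner_Integration.integrable_bound[OF int_phi])
    show "(\<lambda>z. std_normal_density z *\<^sub>R e z) \<in> borel_measurable lborel"
      unfolding e_def normal_density_def
      by (auto intro!: borel_measurable_continuous_onI continuous_intros)
    show "AE z in lborel. norm (std_normal_density z *\<^sub>R e z) \<le> norm (std_normal_density z)"
      by (rule AE_I2) (simp add: cmod_e)
  qed
  have fullK: "(\<integral>z. K z \<partial>lborel) = 1 - complex_of_real (exp (-((x*Y)^2)/2))"
  proof -
    have "(\<integral>z. K z \<partial>lborel) = (\<integral>z. std_normal_density z *\<^sub>R (1::complex) \<partial>lborel) - (\<integral>z. std_normal_density z *\<^sub>R e z \<partial>lborel)"
      unfolding K_def scaleR_diff_right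
      by (rule Bochner_Integration.integral_diff) (use inte in auto)
    also have "(\<integral>z. std_normal_density z *\<^sub>R (1::complex) \<partial>lborel) = 1"
    proof -
      have "(\<integral>z. std_normal_density z *\<^sub>R (1::complex) \<partial>lborel) = (\<integral>z. std_normal_density z \<partial>lborel) *\<^sub>R 1"
        by (rule integral_scaleR_left) (rule int_phi)
      then show ?thesis by simp
    qed
    also have "(\<integral>z. std_normal_density z *\<^sub>R e z \<partial>lborel) = complex_of_real (exp (-((x*Y)^2)/2))"
      unfolding e_def fourier by simp
    finally show ?thesis .
  qed
  have hen: "integral S (\<lambda>z. complex_of_real (std_normal_density z) * (1 - exp (- \<i> * complex_of_real (x * Y * z))))
      = (\<integral>z. indicator S z *\<^sub>R K z \<partial>lborel)"
  proof -
    have "integral S (\<lambda>z. complex_of_real (std_normal_density z) * (1 - exp (- \<i> * complex_of_real (x * Y * z))))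
        = integral S K" unfolding K_def e_alt by (simp add: scaleR_conv_of_real)
    also have "\<dots> = (LBINT z:S. K z)"
      unfolding S_def
      by (rule set_borel_integral_eq_integral(2)[symmetric]) (rule borel_integrable_atLeastAtMost'[OF contK])
    finally show ?thesis by (simp add: set_lebesgue_integral_def)
  qed
  have intSK: "integrable lborel (\<lambda>z. indicator S z *\<^sub>R K z)"
    unfolding S_def by (rule integrable_mult_indicator) (auto intro: intK)
  have split: "1 - (\<integral>z. indicator S z *\<^sub>R K z \<partial>lborel)
      = (\<integral>z. indicator (-S) z *\<^sub>R K z \<partial>lborel) + complex_of_real (exp (-((x*Y)^2)/2))"
  proof -
    have "(\<integral>z. indicator (-S) z *\<^sub>R K z \<partial>lborel) = (\<integral>z. K z - indicator S z *\<^sub>R K z \<partial>lborel)"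
      by (rule Bochner_Integration.integral_cong) (auto split: split_indicator)
    also have "\<dots> = (\<integral>z. K z \<partial>lborel) - (\<integral>z. indicator S z *\<^sub>R K z \<partial>lborel)"
      by (rule Bochner_Integration.integral_diff[OF intK intSK])
    finally show ?thesis using fullK by simp
  qed
  have tail: "norm (\<integral>z. indicator (-S) z *\<^sub>R K z \<partial>lborel) \<le> 2 * exp (-(Z^2)/2)"
  proof -
    have "norm (\<integral>z. indicator (-S) z *\<^sub>R K z \<partial>lborel) \<le> (\<integral>z. norm (indicator (-S) z *\<^sub>R K z) \<partial>lborel)"
      by (rule integral_norm_bound)
    also have "\<dots> \<le> (\<integral>z. 2 * (indicator (-S) z * std_normal_density z) \<partial>lborel)"
    proof (rule integral_mono)
      show "integrable lborel (\<lambda>z. norm (indicator (-S) z *\<^sub>R K z))"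
        unfolding S_def by (intro integrable_norm integrable_mult_indicator) (auto intro: intK)
      show "integrable lborel (\<lambda>z. 2 * (indicator (-S) z * std_normal_density z))"
        unfolding S_def by (intro integrable_mult_right integrable_phi_ind) auto
      fix z show "norm (indicator (-S) z *\<^sub>R K z) \<le> 2 * (indicator (-S) z * std_normal_density z)"
        using normK[of z] by (auto split: split_indicator)
    qed
    also have "\<dots> = 2 * (\<integral>z. indicator (-S) z * std_normal_density z \<partial>lborel)" by simp
    also have "\<dots> \<le> 2 * exp (-(Z^2)/2)"
      unfolding S_def using two_tail[OF assms(3)] by simp
    finally show ?thesis .
  qed
  have "trunc_inv Y Z x - 1 / complex_of_real x
      = - (1 / complex_of_real x) * ((\<integral>z. indicator (-S) z *\<^sub>R K z \<partial>lborel) + complex_of_real (exp (-((x*Y)^2)/2)))"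
    unfolding stepA[OF assms(1,2)] S_def[symmetric] hen split[symmetric] by (simp add: algebra_simps)
  then have "cmod (trunc_inv Y Z x - 1 / complex_of_real x)
      = cmod ((\<integral>z. indicator (-S) z *\<^sub>R K z \<partial>lborel) + complex_of_real (exp (-((x*Y)^2)/2))) / \<bar>x\<bar>"
    by (simp add: norm_mult norm_divide)
  also have "\<dots> \<le> (2 * exp (-(Z^2)/2) + exp (-((x*Y)^2)/2)) / \<bar>x\<bar>"
  proof (rule divide_right_mono)
    have "cmod ((\<integral>z. indicator (-S) z *\<^sub>R K z \<partial>lborel) + complex_of_real (exp (-((x*Y)^2)/2)))
        \<le> cmod (\<integral>z. indicator (-S) z *\<^sub>R K z \<partial>lborel) + cmod (complex_of_real (exp (-((x*Y)^2)/2)))"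
      by (rule norm_triangle_ineq)
    then show "cmod ((\<integral>z. indicator (-S) z *\<^sub>R K z \<partial>lborel) + complex_of_real (exp (-((x*Y)^2)/2)))
        \<le> 2 * exp (-(Z^2)/2) + exp (-((x*Y)^2)/2)" using tail by simp
  qed simp
  finally show ?thesis .
qed



theorem theorem3:
  fixes \<kappa> \<epsilon>T :: real
  assumes "\<kappa> \<ge> 1" and "0 < \<epsilon>T" and "\<epsilon>T < 3 * \<kappa>"
  shows "(SUP x\<in>D_kappa \<kappa>.
            cmod (trunc_inv (\<kappa> * sqrt (2 * ln (3 * \<kappa> / \<epsilon>T)))
                            (sqrt (2 * ln (3 * \<kappa> / \<epsilon>T))) x
                  - 1 / complex_of_real x)) \<le> \<epsilon>T"
proof (rule cSUP_least)
  have "1 \<in> D_kappa \<kappa>" using assms(1) unfolding D_kappa_def by auto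
  then show "D_kappa \<kappa> \<noteq> {}" by blast
next
  fix x assume xD: "x \<in> D_kappa \<kappa>"
  define L where "L = ln (3 * \<kappa> / \<epsilon>T)"
  define Z where "Z = sqrt (2 * L)"
  have k0: "0 < \<kappa>" using assms(1) by simp
  have gt1: "1 < 3 * \<kappa> / \<epsilon>T" using assms by simp
  then have L0: "0 < L" unfolding L_def by simp
  have Z0: "0 \<le> Z" unfolding Z_def using L0 by simp
  have Z2: "Z^2 = 2 * L" unfolding Z_def using L0 by (simp add: less_imp_le)
  have eZ: "exp (-(Z^2)/2) = \<epsilon>T / (3 * \<kappa>)"
    using Z2 gt1 assms(2) k0 unfolding L_def by (simp add: exp_minus)
  have xb: "1 / \<kappa> \<le> \<bar>x\<bar>" using xD unfolding D_kappa_def by auto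
  have x0: "x \<noteq> 0" using xb k0 by auto
  have xk: "1 \<le> \<bar>x\<bar> * \<kappa>" using xb k0 by (simp add: field_simps)
  have ixk: "1 / \<bar>x\<bar> \<le> \<kappa>" using xk x0 by (simp add: field_simps)
  have Y0: "0 \<le> \<kappa> * Z" using k0 Z0 by simp
  have "Z^2 \<le> (x * (\<kappa> * Z))^2"
  proof -
    have "1 \<le> (\<bar>x\<bar> * \<kappa>)^2" using xk by (simp add: one_le_power)
    then have "1 * Z^2 \<le> (\<bar>x\<bar> * \<kappa>)^2 * Z^2" by (rule mult_right_mono) simp
    then show ?thesis by (simp add: power_mult_distrib power2_abs)
  qed
  then have eY: "exp (-((x * (\<kappa> * Z))^2)/2) \<le> exp (-(Z^2)/2)" by simp
  have "cmod (trunc_inv (\<kappa> * Z) Z x - 1 / complex_of_real x)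
      \<le> (2 * exp (-(Z^2)/2) + exp (-((x * (\<kappa> * Z))^2)/2)) / \<bar>x\<bar>"
    by (rule pointwise[OF Y0 x0 Z0])
  also have "\<dots> \<le> (3 * exp (-(Z^2)/2)) / \<bar>x\<bar>"
    using eY by (intro divide_right_mono) auto
  also have "\<dots> = (3 * exp (-(Z^2)/2)) * (1 / \<bar>x\<bar>)" by simp
  also have "\<dots> \<le> (3 * exp (-(Z^2)/2)) * \<kappa>"
    by (rule mult_left_mono[OF ixk]) simp
  also have "\<dots> = \<epsilon>T" using eZ k0 by simp
  finally show "cmod (trunc_inv (\<kappa> * sqrt (2 * ln (3 * \<kappa> / \<epsilon>T))) (sqrt (2 * ln (3 * \<kappa> / \<epsilon>T))) x
                  - 1 / complex_of_real x) \<le> \<epsilon>T"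
    unfolding Z_def L_def .
qed

end
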